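(* Let $(d(t),\,t\ge0)$ be a nonnegative, locally integrable demand function and fix the initial energy configuration. For a discharge-only policy $\pi$ define $\tau(\pi)=\sup\{\tilde T\ge0:\ \text{the unserved energy of }\pi\text{ over }[0,\tilde T]\text{ equals }0\}$. Then $\tau(\mathrm{GGDDF})\ge\tau(\pi)$ for every discharge-only policy $\pi$; that is, the GGDDF policy maximises the time until the stores are first unable to serve all demand.
   Context: A finite set $\mathcal S$ of energy stores is given. Store $i\in\mathcal S$ has capacity $\overline E_i>0$ and maximum discharge rate $P_i>0$. A (discharge-only) policy is a choice of measurable rate functions $(r_i(t),\,t\ge0)$, $i\in\mathcal S$, with stored energies $E_i(t)=E_i(0)-\int_0^t r_i(u)\,du$, subject to $0\le E_i(t)\le\overline E_i$, $0\le r_i(t)\le P_i$ and $\sum_{i\in\mathcal S}r_i(t)\le d(t)$ for all $t\ge0$, where $(d(t),\,t\ge0)$ is a nonnegative demand function. The unserved energy over $[0,T]$ is $\int_0^T\max\bigl(d(t)-\sum_{i}r_i(t),0\bigr)dt$. GGDDF (greedy greatest-discharge-duration-first) policy: at (almost) every time $t$, the total served rate is $\bar d(t)=\min\bigl(d(t),\sum_{i:E_i(t)>0}P_i\bigr)$, and it is allocated as follows: the nonempty stores are partitioned into groups $G_1,G_2,\dots$ of equal discharge-duration $E_i(t)/P_i$, listed in strictly decreasing order of that duration; letting $m$ be the least index with $\sum_{k\le m}\sum_{i\in G_k}P_i\ge\bar d(t)$, every store in $G_k$ with $k<m$ discharges at rate $P_i$, every store $i\in G_m$ discharges at rate $\lambda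 P_i$ with $\lambda\in(0,1]$ chosen so that $\sum_i r_i(t)=\bar d(t)$, and all other stores have rate $0$ (all rates are $0$ if $\bar d(t)=0$). *)

theory Defs
  imports "HOL-Analysis.Analysis"
begin

definition energy :: "('s \<Rightarrow> real) \<Rightarrow> ('s \<Rightarrow> real \<Rightarrow> real) \<Rightarrow> 's \<Rightarrow> real \<Rightarrow> real" where
  "energy E0 r i t = E0 i - (LINT u:{0..t}|lborel. r i u)"

definition is_policy ::
  "'s set \<Rightarrow> ('s \<Rightarrow> real) \<Rightarrow> ('s \<Rightarrow> real) \<Rightarrow> (real \<Rightarrow> real) \<Rightarrow> ('s \<Rightarrow> real)
   \<Rightarrow> ('s \<Rightarrow> real \<Rightarrow> real) \<Rightarrow> bool" where
  "is_policy S Ebar P d E0 r \<longleftrightarrow>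
     (\<forall>i\<in>S. set_borel_measurable lborel {0..} (r i)) \<and>
     (\<forall>t\<ge>0. (\<forall>i\<in>S. 0 \<le> energy E0 r i t \<and> energy E0 r i t \<le> Ebar i
                       \<and> 0 \<le> r i t \<and> r i t \<le> P i)
            \<and> (\<Sum>i\<in>S. r i t) \<le> d t)"

definition unserved :: "'s set \<Rightarrow> (real \<Rightarrow> real) \<Rightarrow> ('s \<Rightarrow> real \<Rightarrow> real) \<Rightarrow> real \<Rightarrow> real" where
  "unserved S d r T = (LINT t:{0..T}|lborel. max (d t - (\<Sum>i\<in>S. r i t)) 0)"

definition tau :: "'s set \<Rightarrow> (real \<Rightarrow> real) \<Rightarrow> ('s \<Rightarrow> real \<Rightarrow> real) \<Rightarrow> ereal" where
  "tau S d r = Sup (ereal ` {T. T \<ge> 0 \<and> unserved S d r T = 0})"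

text \<open>Groups of equal discharge duration E i / P i among nonempty stores; \<theta> is the
  duration of the marginal group G_m; stores of strictly larger duration (groups
  before G_m) discharge at full rate, stores of G_m at rate lam P i, others at 0.
  The least-index condition on m is the two inequalities on cumulative rates.\<close>
definition ggddf_rule ::
  "'s set \<Rightarrow> ('s \<Rightarrow> real) \<Rightarrow> real \<Rightarrow> ('s \<Rightarrow> real) \<Rightarrow> ('s \<Rightarrow> real) \<Rightarrow> bool" where
  "ggddf_rule S P dt E rt \<longleftrightarrow>
     (let N = {i\<in>S. E i > 0};
          dur = (\<lambda>i. E i / P i);
          dbar = min dt (\<Sum>i\<in>N. P i)
      in (dbar = 0 \<longrightarrow> (\<forall>i\<in>S. rt i = 0)) \<and>
         (dbar \<noteq> 0 \<longrightarrow>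
            (\<exists>\<theta>\<in>dur ` N. \<exists>lam. 0 < lam \<and> lam \<le> 1 \<and>
               (\<Sum>i\<in>{i\<in>N. dur i > \<theta>}. P i) < dbar \<and>
               dbar \<le> (\<Sum>i\<in>{i\<in>N. dur i \<ge> \<theta>}. P i) \<and>
               (\<forall>i\<in>S. rt i = (if i \<in> N \<and> dur i > \<theta> then P i
                               else if i \<in> N \<and> dur i = \<theta> then lam * P i
                               else 0)) \<and>
               (\<Sum>i\<in>S. rt i) = dbar)))"

definition is_ggddf ::
  "'s set \<Rightarrow> ('s \<Rightarrow> real) \<Rightarrow> ('s \<Rightarrow> real) \<Rightarrow> (real \<Rightarrow> real) \<Rightarrow> ('s \<Rightarrow> real)
   \<Rightarrow> ('s \<Rightarrow> real \<Rightarrow> real) \<Rightarrow> bool" where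
  "is_ggddf S Ebar P d E0 r \<longleftrightarrow>
     is_policy S Ebar P d E0 r \<and>
     (AE t in lborel. t \<ge> 0 \<longrightarrow>
        ggddf_rule S P (d t) (\<lambda>i. energy E0 r i t) (\<lambda>i. r i t))"

end

theory Submission imports Defs begin

lemma pol_setint:
  assumes pol: "is_policy S Ebar P d E0 r" and i: "i \<in> S" and a: "0 \<le> a"
  shows "set_integrable lborel {a..b} (r i)"
proof -
  have m: "(\<lambda>x. indicator {0..} x *\<^sub>R r i x) \<in> borel_measurable lborel"
    using pol i unfolding is_policy_def set_borel_measurable_def by auto
  have "integrable lborel (\<lambda>x. indicator {a..b} x *\<^sub>R (indicator {0..} x *\<^sub>R r i x))"
  proof (rule integrableI_bounded_set_indicator[where B="P i"])
    show "AE x in lborel. x \<in> {a..b} \<longrightarrow> norm (indicator {0..} x *\<^sub>R r i x) \<le> P i"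
    proof (intro AE_I2 impI)
      fix x :: real assume "x \<in> {a..b}"
      then have "x \<ge> 0" using a by auto
      then have "0 \<le> r i x \<and> r i x \<le> P i" using pol i unfolding is_policy_def by blast
      then show "norm (indicator {0..} x *\<^sub>R r i x) \<le> P i" using \<open>x \<ge> 0\<close> by simp
    qed
    show "emeasure lborel {a..b} < \<infinity>" by (simp add: emeasure_lborel_Icc_eq)
  qed (use m in simp_all)
  moreover have "(\<lambda>x. indicator {a..b} x *\<^sub>R (indicator {0..} x *\<^sub>R r i x)) = (\<lambda>x. indicator {a..b} x *\<^sub>R r i x)"
    using a by (auto simp: indicator_def fun_eq_iff)
  ultimately show ?thesis unfolding set_integrable_def by metis
qed

lemma pol_intg:
  assumes pol: "is_policy S Ebar P d E0 r" and i: "i \<in> S" and a: "0 \<le> a"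
  shows "r i integrable_on {a..b}" "(LINT x:{a..b}|lborel. r i x) = integral {a..b} (r i)"
  using set_borel_integral_eq_integral[OF pol_setint[OF assms]] by auto

lemma energy_split:
  assumes pol: "is_policy S Ebar P d E0 r" and i: "i \<in> S" and a: "0 \<le> a" "a \<le> t"
  shows "energy E0 r i t = energy E0 r i a - (LINT x:{a..t}|lborel. r i x)"
proof -
  have "integral {0..a} (r i) + integral {a..t} (r i) = integral {0..t} (r i)"
    by (rule Henstock_Kurzweil_Integration.integral_combine) (use a pol_intg[OF pol i, of 0 t] in auto)
  then show ?thesis unfolding energy_def
    using pol_intg(2)[OF pol i, of 0 t] pol_intg(2)[OF pol i, of 0 a] pol_intg(2)[OF pol i, of a t] a
    by simp
qed

lemma energy_cont:
  assumes pol: "is_policy S Ebar P d E0 r" and i: "i \<in> S" and a: "0 \<le> u"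
  shows "continuous_on {u..t} (energy E0 r i)"
proof -
  have c: "continuous_on {0..t} (\<lambda>x. integral {0..x} (r i))"
    by (rule indefinite_integral_continuous_1) (use pol_intg[OF pol i, of 0 t] in auto)
  have c2: "continuous_on {0..t} (\<lambda>x. E0 i - integral {0..x} (r i))"
    by (rule continuous_on_diff[OF continuous_on_const c])
  have e: "\<And>x. x \<in> {0..t} \<Longrightarrow> energy E0 r i x = E0 i - integral {0..x} (r i)"
    unfolding energy_def using pol_intg(2)[OF pol i] by auto
  have "continuous_on {0..t} (\<lambda>x. energy E0 r i x)"
    using continuous_on_eq[OF c2, of "\<lambda>x. energy E0 r i x"] e by simp
  then have "continuous_on {0..t} (energy E0 r i)" by simp
  then show ?thesis by (rule continuous_on_subset) (use a in auto)
qed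

lemma energy_mono:
  assumes pol: "is_policy S Ebar P d E0 r" and i: "i \<in> S" and a: "0 \<le> a" "a \<le> t"
  shows "energy E0 r i t \<le> energy E0 r i a"
proof -
  have z: "set_integrable lborel {a..t} (\<lambda>x. 0::real)" by (simp add: set_integrable_def)
  have "(LINT x:{a..t}|lborel. (0::real)) \<le> (LINT x:{a..t}|lborel. r i x)"
    by (rule set_integral_mono[OF z pol_setint[OF pol i a(1), of t]])
       (use pol i a in \<open>auto simp: is_policy_def\<close>)
  then have "0 \<le> (LINT x:{a..t}|lborel. r i x)" by simp
  then show ?thesis using energy_split[OF assms] by simp
qed

lemma set_integral_sum':
  fixes f :: "'i \<Rightarrow> 'a \<Rightarrow> real"
  assumes "\<And>i. i \<in> I \<Longrightarrow> set_integrable M A (f i)"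
  shows "set_integrable M A (\<lambda>x. \<Sum>i\<in>I. f i x)"
    "(LINT x:A|M. (\<Sum>i\<in>I. f i x)) = (\<Sum>i\<in>I. LINT x:A|M. f i x)"
  using assms unfolding set_integrable_def set_lebesgue_integral_def
  by (simp_all add: sum_distrib_left)


lemma rule_order:
  assumes R: "ggddf_rule S P dt E rt" and i: "i \<in> S" and j: "j \<in> S"
    and Pi: "P i > 0" and Pj: "P j > 0" and lt: "E j / P j < E i / P i"
  shows "rt j / P j \<le> rt i / P i"
proof -
  define N where "N = {i\<in>S. E i > 0}"
  define dbar where "dbar = min dt (\<Sum>i\<in>N. P i)"
  have R': "(dbar = 0 \<longrightarrow> (\<forall>i\<in>S. rt i = 0)) \<and>
         (dbar \<noteq> 0 \<longrightarrow>
            (\<exists>\<theta>\<in>(\<lambda>i. E i / P i) ` N. \<exists>lam. 0 < lam \<and> lam \<le> 1 \<and>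
               (\<Sum>i\<in>{i\<in>N. E i / P i > \<theta>}. P i) < dbar \<and>
               dbar \<le> (\<Sum>i\<in>{i\<in>N. E i / P i \<ge> \<theta>}. P i) \<and>
               (\<forall>i\<in>S. rt i = (if i \<in> N \<and> E i / P i > \<theta> then P i
                               else if i \<in> N \<and> E i / P i = \<theta> then lam * P i
                               else 0)) \<and>
               (\<Sum>i\<in>S. rt i) = dbar))"
    using R unfolding ggddf_rule_def Let_def N_def dbar_def by simp
  show ?thesis
  proof (cases "dbar = 0")
    case True then show ?thesis using R' i j by simp
  next
    case False
    then obtain \<theta> lam where lam: "0 < lam" "lam \<le> 1"
      and F: "\<forall>i\<in>S. rt i = (if i \<in> N \<and> E i / P i > \<theta> then P i
                               else if i \<in> N \<and> E i / P i = \<theta> then lam * P i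
                               else 0)"
      using R' by blast
    have Fi: "rt i = (if i \<in> N \<and> E i / P i > \<theta> then P i
                               else if i \<in> N \<and> E i / P i = \<theta> then lam * P i
                               else 0)" using F i by blast
    have Fj: "rt j = (if j \<in> N \<and> E j / P j > \<theta> then P j
                               else if j \<in> N \<and> E j / P j = \<theta> then lam * P j
                               else 0)" using F j by blast
    have rti: "0 \<le> rt i" using Fi lam Pi by simp
    show ?thesis
    proof (cases "j \<in> N \<and> E j / P j \<ge> \<theta>")
      case True
      then have "E j > 0" unfolding N_def by simp
      then have "E j / P j > 0" using Pj by simp
      then have "E i / P i > 0" using lt by simp
      then have "E i > 0" using Pi by (simp add: zero_less_divide_iff)
      then have iN: "i \<in> N" unfolding N_def using i by simp
      have "E i / P i > \<theta>" using True lt by simp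
      then have "rt i = P i" using Fi iN by simp
      moreover have "rt j \<le> P j" using Fj lam Pj True by auto
      ultimately show ?thesis using Pi Pj by simp
    next
      case False
      then have "rt j = 0" using Fj by auto
      then show ?thesis using rti Pi by simp
    qed
  qed
qed

lemma rule_set:
  assumes R: "ggddf_rule S P dt E rt" and fin: "finite S" and Ppos: "\<forall>i\<in>S. P i > 0"
    and dt: "0 \<le> dt" and AS: "A \<subseteq> S" and Apos: "\<forall>i\<in>A. E i > 0"
    and sep: "\<forall>i\<in>A. \<forall>j\<in>S - A. E j / P j < E i / P i"
  shows "min dt (\<Sum>i\<in>A. P i) \<le> (\<Sum>i\<in>A. rt i)"
proof -
  define N where "N = {i\<in>S. E i > 0}"
  define dbar where "dbar = min dt (\<Sum>i\<in>N. P i)"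
  have R': "(dbar = 0 \<longrightarrow> (\<forall>i\<in>S. rt i = 0)) \<and>
         (dbar \<noteq> 0 \<longrightarrow>
            (\<exists>\<theta>\<in>(\<lambda>i. E i / P i) ` N. \<exists>lam. 0 < lam \<and> lam \<le> 1 \<and>
               (\<Sum>i\<in>{i\<in>N. E i / P i > \<theta>}. P i) < dbar \<and>
               dbar \<le> (\<Sum>i\<in>{i\<in>N. E i / P i \<ge> \<theta>}. P i) \<and>
               (\<forall>i\<in>S. rt i = (if i \<in> N \<and> E i / P i > \<theta> then P i
                               else if i \<in> N \<and> E i / P i = \<theta> then lam * P i
                               else 0)) \<and>
               (\<Sum>i\<in>S. rt i) = dbar))"
    using R unfolding ggddf_rule_def Let_def N_def dbar_def by simp
  have AN: "A \<subseteq> N" using AS Apos unfolding N_def by auto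
  have finN: "finite N" using fin unfolding N_def by simp
  have PAN: "(\<Sum>i\<in>A. P i) \<le> (\<Sum>i\<in>N. P i)"
    by (rule sum_mono2[OF finN AN]) (use Ppos N_def in auto)
  have mle: "min dt (\<Sum>i\<in>A. P i) \<le> dbar" using PAN unfolding dbar_def by linarith
  show ?thesis
  proof (cases "dbar = 0")
    case True
    then have "(\<Sum>i\<in>A. rt i) = 0" using R' AS by (intro sum.neutral) auto
    then show ?thesis using mle True by simp
  next
    case False
    then obtain \<theta> lam where lam: "0 < lam" "lam \<le> 1"
      and F: "\<forall>i\<in>S. rt i = (if i \<in> N \<and> E i / P i > \<theta> then P i
                               else if i \<in> N \<and> E i / P i = \<theta> then lam * P i
                               else 0)"
      and tot: "(\<Sum>i\<in>S. rt i) = dbar"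
      using R' by blast
    show ?thesis
    proof (cases "\<forall>i\<in>A. E i / P i > \<theta>")
      case True
      then have "(\<Sum>i\<in>A. rt i) = (\<Sum>i\<in>A. P i)"
      proof (intro sum.cong refl)
        fix x assume x: "x \<in> A"
        then have "x \<in> S" "x \<in> N" "E x / P x > \<theta>" using AS AN True by auto
        then show "rt x = P x" using F by simp
      qed
      then show ?thesis by simp
    next
      case False
      then obtain i0 where i0: "i0 \<in> A" "E i0 / P i0 \<le> \<theta>" by auto
      have z: "\<forall>j\<in>S - A. rt j = 0"
      proof
        fix j assume jS: "j \<in> S - A"
        then have "E j / P j < E i0 / P i0" using sep i0(1) by blast
        then have "E j / P j < \<theta>" using i0(2) by linarith
        then show "rt j = 0" using F jS by auto
      qed
      have "(\<Sum>i\<in>S. rt i) = (\<Sum>i\<in>A. rt i) + (\<Sum>i\<in>S - A. rt i)"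
        using fin AS by (metis sum.subset_diff add.commute)
      also have "(\<Sum>i\<in>S - A. rt i) = 0" using z by simp
      finally have "(\<Sum>i\<in>A. rt i) = dbar" using tot by simp
      then show ?thesis using mle by simp
    qed
  qed
qed


lemma order_pres:
  assumes pol: "is_policy S Ebar P d E0 g"
    and ae: "AE t in lborel. t \<ge> 0 \<longrightarrow> ggddf_rule S P (d t) (\<lambda>i. energy E0 g i t) (\<lambda>i. g i t)"
    and Ppos: "\<forall>i\<in>S. P i > 0" and i: "i \<in> S" and j: "j \<in> S"
    and u: "0 \<le> u" "u \<le> t" and it: "energy E0 g i t > 0" and jt: "energy E0 g j t \<le> 0"
  shows "energy E0 g j u / P j < energy E0 g i u / P i"
proof (rule ccontr)
  assume neg: "\<not> ?thesis"
  define \<phi> where "\<phi> v = energy E0 g i v / P i - energy E0 g j v / P j" for v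
  have Pi: "P i > 0" and Pj: "P j > 0" using Ppos i j by auto
  have cont: "continuous_on {u..t} \<phi>"
    unfolding \<phi>_def
    by (intro continuous_on_diff continuous_on_divide energy_cont[OF pol i u(1)]
        energy_cont[OF pol j u(1)] continuous_on_const) (use Pi Pj in auto)
  define W where "W = {v \<in> {u..t}. \<phi> v \<le> 0}"
  have Wc: "closed W" unfolding W_def
    by (rule continuous_on_closed_Collect_le[OF cont continuous_on_const closed_atLeastAtMost])
  have uW: "u \<in> W" unfolding W_def \<phi>_def using neg u by auto
  have Wb: "bdd_above W" unfolding W_def by (rule bdd_aboveI[of _ t]) auto
  define a where "a = Sup W"
  have aW: "a \<in> W" unfolding a_def using closed_contains_Sup[OF _ Wb Wc] uW by blast
  then have a: "u \<le> a" "a \<le> t" "\<phi> a \<le> 0" unfolding W_def by auto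
  have "t \<ge> 0" using u by linarith
  then have "0 \<le> energy E0 g j t" using pol j unfolding is_policy_def by blast
  then have jt0: "energy E0 g j t = 0" using jt by linarith
  have "\<phi> t > 0" unfolding \<phi>_def using jt0 it Pi by simp
  have pos: "\<phi> v > 0" if "v \<in> {a<..t}" for v
  proof (rule ccontr)
    assume "\<not> \<phi> v > 0"
    then have "v \<in> W" unfolding W_def using that a by auto
    then have "v \<le> a" unfolding a_def by (rule cSup_upper[OF _ Wb])
    then show False using that by auto
  qed
  have a0: "0 \<le> a" using a u by linarith
  have ei: "energy E0 g i t = energy E0 g i a - (LINT x:{a..t}|lborel. g i x)"
    by (rule energy_split[OF pol i a0 a(2)])
  have ej: "energy E0 g j t = energy E0 g j a - (LINT x:{a..t}|lborel. g j x)"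
    by (rule energy_split[OF pol j a0 a(2)])
  have Ii: "set_integrable lborel {a..t} (\<lambda>x. (1 / P i) * g i x)"
    using pol_setint[OF pol i a0, of t] by simp
  have Ij: "set_integrable lborel {a..t} (\<lambda>x. (1 / P j) * g j x)"
    using pol_setint[OF pol j a0, of t] by simp
  have z: "set_integrable lborel {a..t} (\<lambda>x. 0::real)" by (simp add: set_integrable_def)
  have AEpos: "AE x\<in>{a..t} in lborel. 0 \<le> (1 / P i) * g i x - (1 / P j) * g j x"
    using ae AE_lborel_singleton[of a]
  proof eventually_elim
    case (elim x)
    show ?case
    proof
      assume x: "x \<in> {a..t}"
      then have x': "x \<in> {a<..t}" using elim(2) by auto
      have "x \<ge> 0" using x a0 by auto
      then have R: "ggddf_rule S P (d x) (\<lambda>i. energy E0 g i x) (\<lambda>i. g i x)" using elim(1) by blast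
      have "energy E0 g j x / P j < energy E0 g i x / P i"
        using pos[OF x'] unfolding \<phi>_def by simp
      then have "g j x / P j \<le> g i x / P i"
        using rule_order[OF R i j Pi Pj] by simp
      then show "0 \<le> (1 / P i) * g i x - (1 / P j) * g j x" by simp
    qed
  qed
  have "(LINT x:{a..t}|lborel. (0::real)) \<le> (LINT x:{a..t}|lborel. (1 / P i) * g i x - (1 / P j) * g j x)"
    by (rule set_integral_mono_AE[OF z set_integral_diff(1)[OF Ii Ij] AEpos])
  also have "\<dots> = (1 / P i) * (LINT x:{a..t}|lborel. g i x) - (1 / P j) * (LINT x:{a..t}|lborel. g j x)"
    using set_integral_diff(2)[OF Ii Ij] by simp
  finally have "0 \<le> (1 / P i) * (LINT x:{a..t}|lborel. g i x) - (1 / P j) * (LINT x:{a..t}|lborel. g j x)"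
    by simp
  then have "\<phi> t \<le> \<phi> a" unfolding \<phi>_def ei ej using Pi Pj by (simp add: field_simps)
  then show False using \<open>\<phi> t > 0\<close> a by linarith
qed


lemma energy_total_le:
  assumes fin: "finite S" and Ppos: "\<forall>i\<in>S. P i > 0" and dnn: "\<forall>t\<ge>0. d t \<ge> 0"
    and polg: "is_policy S Ebar P d E0 g"
    and ae: "AE t in lborel. t \<ge> 0 \<longrightarrow> ggddf_rule S P (d t) (\<lambda>i. energy E0 g i t) (\<lambda>i. g i t)"
    and polr: "is_policy S Ebar P d E0 r" and t: "0 \<le> t"
  shows "(\<Sum>i\<in>S. energy E0 g i t) \<le> (\<Sum>i\<in>S. energy E0 r i t)"
proof -
  define A where "A = {i\<in>S. energy E0 g i t > 0}"
  have AS: "A \<subseteq> S" unfolding A_def by auto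
  have finA: "finite A" using fin AS finite_subset by blast
  have AEB: "AE u\<in>{0..t} in lborel. (\<Sum>i\<in>A. r i u) \<le> (\<Sum>i\<in>A. g i u)"
    using ae
  proof eventually_elim
    case (elim u)
    show ?case
    proof
      assume u: "u \<in> {0..t}"
      then have R: "ggddf_rule S P (d u) (\<lambda>i. energy E0 g i u) (\<lambda>i. g i u)" using elim by auto
      have Apos: "\<forall>i\<in>A. energy E0 g i u > 0"
      proof
        fix i assume "i \<in> A"
        then have "i \<in> S" "energy E0 g i t > 0" unfolding A_def by auto
        moreover have "energy E0 g i t \<le> energy E0 g i u"
          using energy_mono[OF polg \<open>i \<in> S\<close>] u by auto
        ultimately show "energy E0 g i u > 0" by linarith
      qed
      have sep: "\<forall>i\<in>A. \<forall>j\<in>S - A. energy E0 g j u / P j < energy E0 g i u / P i"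
      proof (intro ballI)
        fix i j assume i: "i \<in> A" and j: "j \<in> S - A"
        show "energy E0 g j u / P j < energy E0 g i u / P i"
          by (rule order_pres[OF polg ae Ppos]) (use i j u A_def in auto)
      qed
      have du: "0 \<le> d u" using dnn u by auto
      have m: "min (d u) (\<Sum>i\<in>A. P i) \<le> (\<Sum>i\<in>A. g i u)"
        by (rule rule_set[OF R fin Ppos du AS Apos sep])
      have ru: "\<forall>i\<in>S. 0 \<le> r i u \<and> r i u \<le> P i" "(\<Sum>i\<in>S. r i u) \<le> d u"
        using polr u unfolding is_policy_def by auto
      have "(\<Sum>i\<in>A. r i u) \<le> (\<Sum>i\<in>S. r i u)"
        by (rule sum_mono2[OF fin AS]) (use ru in auto)
      then have r1: "(\<Sum>i\<in>A. r i u) \<le> d u" using ru by linarith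
      have r2: "(\<Sum>i\<in>A. r i u) \<le> (\<Sum>i\<in>A. P i)"
        by (rule sum_mono) (use ru AS in auto)
      show "(\<Sum>i\<in>A. r i u) \<le> (\<Sum>i\<in>A. g i u)" using m r1 r2 by linarith
    qed
  qed
  have Ig: "\<And>i. i \<in> A \<Longrightarrow> set_integrable lborel {0..t} (g i)"
    using pol_setint[OF polg] AS by blast
  have Ir: "\<And>i. i \<in> A \<Longrightarrow> set_integrable lborel {0..t} (r i)"
    using pol_setint[OF polr] AS by blast
  have "(LINT u:{0..t}|lborel. (\<Sum>i\<in>A. r i u)) \<le> (LINT u:{0..t}|lborel. (\<Sum>i\<in>A. g i u))"
    by (rule set_integral_mono_AE[OF set_integral_sum'(1)[OF Ir] set_integral_sum'(1)[OF Ig] AEB])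
  then have Ile: "(\<Sum>i\<in>A. LINT u:{0..t}|lborel. r i u) \<le> (\<Sum>i\<in>A. LINT u:{0..t}|lborel. g i u)"
    using set_integral_sum'(2)[where I=A and f=r, OF Ir] set_integral_sum'(2)[where I=A and f=g, OF Ig] by simp
  have "(\<Sum>i\<in>S. energy E0 g i t) = (\<Sum>i\<in>A. energy E0 g i t) + (\<Sum>i\<in>S - A. energy E0 g i t)"
    using fin AS by (metis sum.subset_diff add.commute)
  also have "(\<Sum>i\<in>S - A. energy E0 g i t) = 0"
  proof (rule sum.neutral, rule ballI)
    fix i assume i: "i \<in> S - A"
    then have "0 \<le> energy E0 g i t" using polg t unfolding is_policy_def by auto
    moreover have "\<not> energy E0 g i t > 0" using i unfolding A_def by auto
    ultimately show "energy E0 g i t = 0" by linarith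
  qed
  also have "(\<Sum>i\<in>A. energy E0 g i t) = (\<Sum>i\<in>A. E0 i) - (\<Sum>i\<in>A. LINT u:{0..t}|lborel. g i u)"
    unfolding energy_def by (simp add: sum_subtractf)
  also have "\<dots> \<le> (\<Sum>i\<in>A. E0 i) - (\<Sum>i\<in>A. LINT u:{0..t}|lborel. r i u)" using Ile by linarith
  also have "\<dots> = (\<Sum>i\<in>A. energy E0 r i t)"
    unfolding energy_def by (simp add: sum_subtractf)
  also have "\<dots> \<le> (\<Sum>i\<in>S. energy E0 r i t)"
    by (rule sum_mono2[OF fin AS]) (use polr t in \<open>auto simp: is_policy_def\<close>)
  finally show ?thesis by simp
qed

lemma unserved_eq:
  assumes fin: "finite S" and pol: "is_policy S Ebar P d E0 r"
    and dI: "set_integrable lborel {0..T} d" and T: "0 \<le> T"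
  shows "unserved S d r T = (LINT t:{0..T}|lborel. d t) - (\<Sum>i\<in>S. E0 i) + (\<Sum>i\<in>S. energy E0 r i T)"
    and "0 \<le> unserved S d r T"
proof -
  have Ir: "\<And>i. i \<in> S \<Longrightarrow> set_integrable lborel {0..T} (r i)"
    using pol_setint[OF pol] by blast
  have IS: "set_integrable lborel {0..T} (\<lambda>t. \<Sum>i\<in>S. r i t)"
    by (rule set_integral_sum'(1)[OF Ir])
  have le: "\<And>t. t \<in> {0..T} \<Longrightarrow> (\<Sum>i\<in>S. r i t) \<le> d t"
    using pol unfolding is_policy_def by auto
  have u: "unserved S d r T = (LINT t:{0..T}|lborel. d t - (\<Sum>i\<in>S. r i t))"
    unfolding unserved_def
    by (rule set_lebesgue_integral_cong) (use le in auto)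
  also have "\<dots> = (LINT t:{0..T}|lborel. d t) - (LINT t:{0..T}|lborel. (\<Sum>i\<in>S. r i t))"
    by (rule set_integral_diff(2)[OF dI IS])
  also have "(LINT t:{0..T}|lborel. (\<Sum>i\<in>S. r i t)) = (\<Sum>i\<in>S. LINT t:{0..T}|lborel. r i t)"
    by (rule set_integral_sum'(2)[OF Ir])
  also have "\<dots> = (\<Sum>i\<in>S. E0 i) - (\<Sum>i\<in>S. energy E0 r i T)"
    unfolding energy_def by (simp add: sum_subtractf)
  finally show "unserved S d r T = (LINT t:{0..T}|lborel. d t) - (\<Sum>i\<in>S. E0 i) + (\<Sum>i\<in>S. energy E0 r i T)"
    by simp
  have z: "set_integrable lborel {0..T} (\<lambda>x. 0::real)" by (simp add: set_integrable_def)
  have "(LINT t:{0..T}|lborel. (0::real)) \<le> (LINT t:{0..T}|lborel. d t - (\<Sum>i\<in>S. r i t))"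
    by (rule set_integral_mono[OF z set_integral_diff(1)[OF dI IS]]) (use le in auto)
  then show "0 \<le> unserved S d r T" using u by simp
qed

theorem mainTheorem5:
  fixes S :: "'s set" and Ebar P E0 :: "'s \<Rightarrow> real" and d :: "real \<Rightarrow> real"
    and g r :: "'s \<Rightarrow> real \<Rightarrow> real"
  assumes "finite S"
    and "\<forall>i\<in>S. Ebar i > 0 \<and> P i > 0"
    and "\<forall>i\<in>S. 0 \<le> E0 i \<and> E0 i \<le> Ebar i"
    and "\<forall>t\<ge>0. d t \<ge> 0"
    and "\<forall>T. set_integrable lborel {0..T} d"
    and "is_ggddf S Ebar P d E0 g"
    and "is_policy S Ebar P d E0 r"
  shows "tau S d g \<ge> tau S d r"
proof -
  note fin = assms(1)
  have Ppos: "\<forall>i\<in>S. P i > 0" using assms(2) by auto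
  have polg: "is_policy S Ebar P d E0 g"
    and ae: "AE t in lborel. t \<ge> 0 \<longrightarrow> ggddf_rule S P (d t) (\<lambda>i. energy E0 g i t) (\<lambda>i. g i t)"
    using assms(6) unfolding is_ggddf_def by auto
  note polr = assms(7)
  have sub: "{T. T \<ge> 0 \<and> unserved S d r T = 0} \<subseteq> {T. T \<ge> 0 \<and> unserved S d g T = 0}"
  proof
    fix T assume "T \<in> {T. T \<ge> 0 \<and> unserved S d r T = 0}"
    then have T: "0 \<le> T" and ur: "unserved S d r T = 0" by auto
    have dI: "set_integrable lborel {0..T} d" using assms(5) by blast
    have "(\<Sum>i\<in>S. energy E0 g i T) \<le> (\<Sum>i\<in>S. energy E0 r i T)"
      by (rule energy_total_le[OF fin Ppos assms(4) polg ae polr T])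
    then have "unserved S d g T \<le> unserved S d r T"
      using unserved_eq(1)[OF fin polg dI T] unserved_eq(1)[OF fin polr dI T] by linarith
    then have "unserved S d g T = 0" using ur unserved_eq(2)[OF fin polg dI T] by linarith
    then show "T \<in> {T. T \<ge> 0 \<and> unserved S d g T = 0}" using T by auto
  qed
  show ?thesis unfolding tau_def
    by (rule Sup_subset_mono) (use sub in blast)
qed

end
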